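(* Let $\mathbf{X}$, $\mathbf{A}$ be $\sigma$-structures and $k\ge1$. Then $\mathrm{SA}^k(\mathbf{X},\mathbf{A})$ is feasible if and only if $\mathrm{SA}^1(\mathbf{X}^{*k},\mathbf{A}^{*k})$ is feasible.
   Context: A signature $\sigma$ is a finite set of relation symbols with arities $\operatorname{ar}(R)\ge1$; a $\sigma$-structure $\mathbf{A}$ has finite universe $A$ and relations $R^\mathbf{A}\subseteq A^{\operatorname{ar}(R)}$. Constraints: $\mathcal{C}_\mathbf{A}=\{R(\mathbf{a}):R\in\sigma,\mathbf{a}\in R^\mathbf{A}\}$ (formal symbols). For a tuple $\mathbf{a}$, $a_i$ is its $i$-th entry, $\{\mathbf{a}\}$ its set of entries; for $\mathbf{a}\in A^j$ and $\mathbf{i}=(i_1,\dots,i_n)\in[j]^n$, $\pi_\mathbf{i}\mathbf{a}=(a_{i_1},\dots,a_{i_n})$. $\mathrm{SA}^k(\mathbf{X},\mathbf{A})$: variables $p_V(f)\in[0,1]$ for $V\subseteq X$ with $1\le|V|\le k$ and $f:V\to A$, and $p_{R(\mathbf{x})}(f)\in[0,1]$ for $R(\mathbf{x})\in\mathcal{C}_\mathbf{X}$ and $f:\{\mathbf{x}\}\to A$; constraints: $\sum_{f:V\to A}p_V(f)=1$ for each $V$; $p_U(f)=\sum_{g:V\to A,\,g|_U=f}p_V(g)$ for $U\subseteq V\subseteq X$, $|V|\le k$ (nonempty $U$), $f:U\to A$; $p_U(f)=\sum_{g:\{\mathbf{x}\}\to A,\,g|_U=f}p_{R(\mathbf{x})}(g)$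 for $R(\mathbf{x})\in\mathcal{C}_\mathbf{X}$, nonempty $U\subseteq\{\mathbf{x}\}$ with $|U|\le k$, $f:U\to A$; $p_{R(\mathbf{x})}(f)=0$ whenever $f(\mathbf{x})\notin R^\mathbf{A}$. Feasible means it has a rational solution. ($\mathrm{SA}^1$ is the case $k=1$.) For $k\ge1$, $\mathbf{A}^{*k}$ is the structure with universe $\bigcup_{1\le j\le k}A^j\cup\mathcal{C}_\mathbf{A}$ (disjoint) over signature $\sigma^*_k$ with relations: unary $T_{j,S}=\{\mathbf{a}\in A^j: a_i=a_{i'}\ \forall i,i'\in S\}$ for $j\le k$, $S\subseteq[j]$; binary $T_{j,\mathbf{i}}=\{(\mathbf{a},\pi_\mathbf{i}\mathbf{a}):\mathbf{a}\in A^j\}$ for $j,j'\le k$, $\mathbf{i}\in[j]^{j'}$; unary $R_S=\{R(\mathbf{a}):\mathbf{a}\in R^\mathbf{A},\ a_i=a_{i'}\ \forall i,i'\in S\}$ for $R\in\sigma$, $S\subseteq[\operatorname{ar}(R)]$; binary $R_\mathbf{i}=\{(R(\mathbf{a}),\pi_\mathbf{i}\mathbf{a}):\mathbf{a}\in R^\mathbf{A}\}$ for $R\in\sigma$, $j\le k$, $\mathbf{i}\in[\operatorname{ar}(R)]^j$. *)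

theory Defs
  imports Complex_Main "HOL-Library.FuncSet"
begin

text \<open>Tuple positions are indexed from 0 (so [j] is rendered as {0..<j}).\<close>

record ('u, 'r) struc =
  univ :: "'u set"
  rels :: "'r \<Rightarrow> 'u list set"

definition signature :: "'r set \<Rightarrow> ('r \<Rightarrow> nat) \<Rightarrow> bool" where
  "signature sig ar \<longleftrightarrow> finite sig \<and> (\<forall>R\<in>sig. 1 \<le> ar R)"

definition is_struc :: "'r set \<Rightarrow> ('r \<Rightarrow> nat) \<Rightarrow> ('u, 'r) struc \<Rightarrow> bool" where
  "is_struc sig ar S \<longleftrightarrow> finite (univ S) \<and>
     (\<forall>R\<in>sig. rels S R \<subseteq> {xs. length xs = ar R \<and> set xs \<subseteq> univ S})"

definition SA_feasible ::
  "'r set \<Rightarrow> ('r \<Rightarrow> nat) \<Rightarrow> nat \<Rightarrow> ('x, 'r) struc \<Rightarrow> ('a, 'r) struc \<Rightarrow> bool" where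
  "SA_feasible sig ar k X A \<longleftrightarrow>
    (\<exists>(p :: 'x set \<Rightarrow> ('x \<Rightarrow> 'a) \<Rightarrow> rat) (q :: 'r \<Rightarrow> 'x list \<Rightarrow> ('x \<Rightarrow> 'a) \<Rightarrow> rat).
      \<comment> \<open>variable ranges\<close>
      (\<forall>V f. V \<subseteq> univ X \<and> 1 \<le> card V \<and> card V \<le> k \<and> f \<in> V \<rightarrow>\<^sub>E univ A
          \<longrightarrow> 0 \<le> p V f \<and> p V f \<le> 1) \<and>
      (\<forall>R x f. R \<in> sig \<and> x \<in> rels X R \<and> f \<in> set x \<rightarrow>\<^sub>E univ A
          \<longrightarrow> 0 \<le> q R x f \<and> q R x f \<le> 1) \<and>
      \<comment> \<open>normalisation\<close>
      (\<forall>V. V \<subseteq> univ X \<and> 1 \<le> card V \<and> card V \<le> k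
          \<longrightarrow> (\<Sum>f\<in>V \<rightarrow>\<^sub>E univ A. p V f) = 1) \<and>
      \<comment> \<open>marginalisation between sets\<close>
      (\<forall>U V f. U \<noteq> {} \<and> U \<subseteq> V \<and> V \<subseteq> univ X \<and> card V \<le> k \<and> f \<in> U \<rightarrow>\<^sub>E univ A
          \<longrightarrow> p U f = (\<Sum>g\<in>{g \<in> V \<rightarrow>\<^sub>E univ A. restrict g U = f}. p V g)) \<and>
      \<comment> \<open>marginalisation of constraint variables\<close>
      (\<forall>R x U f. R \<in> sig \<and> x \<in> rels X R \<and> U \<noteq> {} \<and> U \<subseteq> set x \<and> card U \<le> k
          \<and> f \<in> U \<rightarrow>\<^sub>E univ A
          \<longrightarrow> p U f = (\<Sum>g\<in>{g \<in> set x \<rightarrow>\<^sub>E univ A. restrict g U = f}. q R x g)) \<and>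
      \<comment> \<open>support on the relation of A\<close>
      (\<forall>R x f. R \<in> sig \<and> x \<in> rels X R \<and> f \<in> set x \<rightarrow>\<^sub>E univ A \<and> map f x \<notin> rels A R
          \<longrightarrow> q R x f = 0))"

text \<open>The signature sigma*_k. TS j S = T_{j,S}; TI j i = T_{j,i} (with j' = length i);
RS R S = R_S; RI R i = R_i (with j = length i).\<close>

datatype 'r starsym = TS nat "nat set" | TI nat "nat list" | RS 'r "nat set" | RI 'r "nat list"

definition star_sig :: "'r set \<Rightarrow> ('r \<Rightarrow> nat) \<Rightarrow> nat \<Rightarrow> 'r starsym set" where
  "star_sig sig ar k =
     {TS j S | j S. 1 \<le> j \<and> j \<le> k \<and> S \<subseteq> {0..<j}} \<union>
     {TI j i | j i. 1 \<le> j \<and> j \<le> k \<and> 1 \<le> length i \<and> length i \<le> k \<and> set i \<subseteq> {0..<j}} \<union>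
     {RS R S | R S. R \<in> sig \<and> S \<subseteq> {0..<ar R}} \<union>
     {RI R i | R i. R \<in> sig \<and> 1 \<le> length i \<and> length i \<le> k \<and> set i \<subseteq> {0..<ar R}}"

fun star_ar :: "'r starsym \<Rightarrow> nat" where
  "star_ar (TS _ _) = 1"
| "star_ar (TI _ _) = 2"
| "star_ar (RS _ _) = 1"
| "star_ar (RI _ _) = 2"

text \<open>The structure A^{*k}: universe is the disjoint union of the tuples A^j (1 \<le> j \<le> k), as Inl,
and the constraints R(a) of A, as Inr (R, a).\<close>

definition star :: "'r set \<Rightarrow> ('r \<Rightarrow> nat) \<Rightarrow> nat \<Rightarrow> ('a, 'r) struc
    \<Rightarrow> ('a list + ('r \<times> 'a list), 'r starsym) struc" where
  "star sig ar k A = \<lparr>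
     univ = Inl ` {a. 1 \<le> length a \<and> length a \<le> k \<and> set a \<subseteq> univ A}
            \<union> Inr ` {(R, a). R \<in> sig \<and> a \<in> rels A R},
     rels = (\<lambda>s. case s of
        TS j S \<Rightarrow> {[Inl a] | a. length a = j \<and> set a \<subseteq> univ A \<and>
                                (\<forall>i\<in>S. \<forall>i'\<in>S. a ! i = a ! i')}
      | TI j ix \<Rightarrow> {[Inl a, Inl (map (\<lambda>t. a ! t) ix)] | a. length a = j \<and> set a \<subseteq> univ A}
      | RS R S \<Rightarrow> {[Inr (R, a)] | a. a \<in> rels A R \<and> (\<forall>i\<in>S. \<forall>i'\<in>S. a ! i = a ! i')}
      | RI R ix \<Rightarrow> {[Inr (R, a), Inl (map (\<lambda>t. a ! t) ix)] | a. a \<in> rels A R}) \<rparr>"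

end

theory Submission
  imports Defs
begin

definition bs :: "('x list + ('r \<times> 'x list)) \<Rightarrow> 'x list" where
  "bs w = (case w of Inl x \<Rightarrow> x | Inr Rx \<Rightarrow> snd Rx)"

definition ex :: "('x \<Rightarrow> 'a) \<Rightarrow> ('x list + ('r \<times> 'x list)) \<Rightarrow> ('a list + ('r \<times> 'a list))" where
  "ex f w = (case w of Inl x \<Rightarrow> Inl (map f x) | Inr Rx \<Rightarrow> Inr (fst Rx, map f (snd Rx)))"

definition projf :: "nat list \<Rightarrow> ('a list + ('r \<times> 'a list)) \<Rightarrow> ('a list + ('r \<times> 'a list))" where
  "projf ix c = Inl (map (\<lambda>t. bs c ! t) ix)"

lemma bs_simps[simp]: "bs (Inl x) = x" "bs (Inr (R, x)) = x"
  by (auto simp: bs_def)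

lemma ex_simps[simp]: "ex f (Inl x) = Inl (map f x)" "ex f (Inr (R, x)) = Inr (R, map f x)"
  by (auto simp: ex_def)

lemma bs_ex[simp]: "bs (ex f w) = map f (bs w)"
  by (cases w) auto

lemma ex_cong: "(\<And>v. v \<in> set (bs w) \<Longrightarrow> f v = g v) \<Longrightarrow> ex f w = ex g w"
  by (cases w) auto

lemma projf_ex:
  assumes "set ix \<subseteq> {0..<length (bs w)}"
  shows "projf ix (ex g w) = Inl (map g (map (\<lambda>t. bs w ! t) ix))"
  using assms by (auto simp: projf_def)

lemma univ_star_Inl[simp]:
  "Inl a \<in> univ (star sig ar k A) \<longleftrightarrow> 1 \<le> length a \<and> length a \<le> k \<and> set a \<subseteq> univ A"
  by (auto simp: star_def)

lemma univ_star_Inr[simp]: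
  "Inr (R, a) \<in> univ (star sig ar k A) \<longleftrightarrow> R \<in> sig \<and> a \<in> rels A R"
  by (auto simp: star_def)

lemma univ_star:
  "c \<in> univ (star sig ar k A) \<longleftrightarrow> (\<exists>a. c = Inl a \<and> 1 \<le> length a \<and> length a \<le> k \<and> set a \<subseteq> univ A)
     \<or> (\<exists>R a. c = Inr (R, a) \<and> R \<in> sig \<and> a \<in> rels A R)"
  by (cases c) auto

lemma finite_star:
  assumes "signature sig ar" "is_struc sig ar A"
  shows "finite (univ (star sig ar k A))"
proof -
  have f1: "finite {a. 1 \<le> length a \<and> length a \<le> k \<and> set a \<subseteq> univ A}"
    by (rule finite_subset[OF _ finite_lists_length_le[of "univ A" k]])
       (use assms in \<open>auto simp: is_struc_def\<close>)
  have fr: "finite (rels A R)" if "R \<in> sig" for R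
    by (rule finite_subset[OF _ finite_lists_length_le[of "univ A" "ar R"]])
       (use assms that in \<open>auto simp: is_struc_def dest!: bspec[of sig _ R]\<close>)
  have "{(R, a). R \<in> sig \<and> a \<in> rels A R} = Sigma sig (rels A)" by auto
  moreover have "finite (Sigma sig (rels A))"
    using assms fr by (auto simp: signature_def)
  ultimately show ?thesis using f1 by (simp add: star_def)
qed

definition tgt :: "'x list \<Rightarrow> 'a set \<Rightarrow> 'a list set" where
  "tgt x B = {a. length a = length x \<and> set a \<subseteq> B \<and>
      (\<forall>i<length x. \<forall>i'<length x. x ! i = x ! i' \<longrightarrow> a ! i = a ! i')}"

lemma map_inj_PiE:
  assumes "g \<in> V \<rightarrow>\<^sub>E B" "g' \<in> V \<rightarrow>\<^sub>E B'" "set x = V" "map g x = map g' x"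
  shows "g = g'"
proof (rule ext)
  fix v show "g v = g' v" using assms
    by (cases "v \<in> V") (auto simp: map_eq_conv PiE_def extensional_def)
qed

lemma bij_map:
  "bij_betw (\<lambda>g. map g x) (set x \<rightarrow>\<^sub>E B) (tgt x B)"
proof (rule bij_betw_imageI)
  show "inj_on (\<lambda>g. map g x) (set x \<rightarrow>\<^sub>E B)"
    by (rule inj_onI) (rule map_inj_PiE[where V="set x" and B=B and B'=B]; simp)
  show "(\<lambda>g. map g x) ` (set x \<rightarrow>\<^sub>E B) = tgt x B"
  proof
    show "(\<lambda>g. map g x) ` (set x \<rightarrow>\<^sub>E B) \<subseteq> tgt x B"
      by (auto simp: tgt_def PiE_iff)
    show "tgt x B \<subseteq> (\<lambda>g. map g x) ` (set x \<rightarrow>\<^sub>E B)"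
    proof
      fix a assume a: "a \<in> tgt x B"
      define ix where "ix v = (SOME i. i < length x \<and> x ! i = v)" for v
      have ix: "ix v < length x \<and> x ! ix v = v" if "v \<in> set x" for v
        unfolding ix_def by (rule someI_ex) (use that in \<open>auto simp: in_set_conv_nth\<close>)
      define g where "g = restrict (\<lambda>v. a ! ix v) (set x)"
      have "map g x = a"
      proof (rule nth_equalityI)
        show "length (map g x) = length a" using a by (auto simp: tgt_def)
        fix i assume "i < length (map g x)"
        then have i: "i < length x" by simp
        then have "x ! i \<in> set x" by simp
        from ix[OF this] have j: "ix (x ! i) < length x" "x ! ix (x ! i) = x ! i" by auto
        have "a ! ix (x ! i) = a ! i" using a j i unfolding tgt_def by blast
        then show "map g x ! i = a ! i" using i by (simp add: g_def)
      qed
      moreover have "g \<in> set x \<rightarrow>\<^sub>E B"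
      proof -
        have "a ! ix v \<in> B" if "v \<in> set x" for v
        proof -
          have "ix v < length a" using ix[OF that] a by (simp add: tgt_def)
          then have "a ! ix v \<in> set a" by (rule nth_mem)
          moreover have "set a \<subseteq> B" using a by (simp add: tgt_def)
          ultimately show ?thesis by blast
        qed
        then show ?thesis by (simp add: g_def)
      qed
      ultimately show "a \<in> (\<lambda>g. map g x) ` (set x \<rightarrow>\<^sub>E B)" by blast
    qed
  qed
qed


lemma sum_singleton_PiE:
  "(\<Sum>h\<in>{w} \<rightarrow>\<^sub>E B. \<phi> (h w)) = (\<Sum>c\<in>B. \<phi> c)"
proof (rule sum.reindex_bij_betw)
  show "bij_betw (\<lambda>h. h w) ({w} \<rightarrow>\<^sub>E B) B"
  proof (rule bij_betw_imageI)
    show "inj_on (\<lambda>h. h w) ({w} \<rightarrow>\<^sub>E B)"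
    proof (rule inj_onI)
      fix h h' assume "h \<in> {w} \<rightarrow>\<^sub>E B" "h' \<in> {w} \<rightarrow>\<^sub>E B" "h w = h' w"
      then show "h = h'" by (intro ext) (metis PiE_E singletonD)
    qed
    show "(\<lambda>h. h w) ` ({w} \<rightarrow>\<^sub>E B) = B"
    proof
      show "(\<lambda>h. h w) ` ({w} \<rightarrow>\<^sub>E B) \<subseteq> B" by auto
      show "B \<subseteq> (\<lambda>h. h w) ` ({w} \<rightarrow>\<^sub>E B)"
      proof
        fix c assume "c \<in> B"
        then have "restrict (\<lambda>_. c) {w} \<in> {w} \<rightarrow>\<^sub>E B" by auto
        then show "c \<in> (\<lambda>h. h w) ` ({w} \<rightarrow>\<^sub>E B)"
          by (intro image_eqI[where x="restrict (\<lambda>_. c) {w}"]) auto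
      qed
    qed
  qed
qed

lemma PiE_restrict_self:
  assumes "f \<in> V \<rightarrow>\<^sub>E B"
  shows "{g \<in> V \<rightarrow>\<^sub>E B. restrict g V = f} = {f}"
  using assms by (auto simp: restrict_PiE_iff)

lemma restrict_singleton_iff:
  assumes "f \<in> {u} \<rightarrow>\<^sub>E B"
  shows "restrict h {u} = f \<longleftrightarrow> h u = f u"
proof
  assume "h u = f u"
  then show "restrict h {u} = f" using assms by (intro ext) (auto simp: PiE_def extensional_def)
qed auto

lemma restrict_map_iff:
  assumes "g \<in> V \<rightarrow>\<^sub>E B" "f \<in> U \<rightarrow>\<^sub>E B'" "set y = U" "U \<subseteq> V"
  shows "restrict g U = f \<longleftrightarrow> map g y = map f y"
proof
  assume "restrict g U = f" then show "map g y = map f y" using assms(3) by auto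
next
  assume "map g y = map f y"
  then show "restrict g U = f" using assms
    by (intro ext) (auto simp: PiE_def extensional_def map_eq_conv)
qed

lemma rels_star_simps:
  "rels (star sig ar k A) (TS j S) = {[Inl a] | a. length a = j \<and> set a \<subseteq> univ A \<and>
                                (\<forall>i\<in>S. \<forall>i'\<in>S. a ! i = a ! i')}"
  "rels (star sig ar k A) (TI j ix) = {[Inl a, Inl (map (\<lambda>t. a ! t) ix)] | a. length a = j \<and> set a \<subseteq> univ A}"
  "rels (star sig ar k A) (RS R S) = {[Inr (R, a)] | a. a \<in> rels A R \<and> (\<forall>i\<in>S. \<forall>i'\<in>S. a ! i = a ! i')}"
  "rels (star sig ar k A) (RI R ix) = {[Inr (R, a), Inl (map (\<lambda>t. a ! t) ix)] | a. a \<in> rels A R}"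
  by (simp_all add: star_def)

lemma L_struct:
  assumes sX: "is_struc sig ar X" and s: "s \<in> star_sig sig ar k"
    and xs: "xs \<in> rels (star sig ar k X) s"
  shows "xs \<noteq> [] \<and> hd xs \<in> univ (star sig ar k X) \<and>
    (\<forall>w\<in>set xs. w = hd xs \<or> (\<exists>y. w = Inl y \<and> 1 \<le> length y \<and> length y \<le> k \<and> set y \<subseteq> set (bs (hd xs))))"
proof -
  have nth_sub: "set (map (\<lambda>t. a ! t) ix) \<subseteq> set a" if "set ix \<subseteq> {0..<length a}"
    for ix and a :: "'x list" using that by auto
  from s consider (TS) j S where "s = TS j S" "1 \<le> j" "j \<le> k" "S \<subseteq> {0..<j}"
    | (TI) j ix where "s = TI j ix" "1 \<le> j" "j \<le> k" "1 \<le> length ix" "length ix \<le> k" "set ix \<subseteq> {0..<j}"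
    | (RS) R S where "s = RS R S" "R \<in> sig" "S \<subseteq> {0..<ar R}"
    | (RI) R ix where "s = RI R ix" "R \<in> sig" "1 \<le> length ix" "length ix \<le> k" "set ix \<subseteq> {0..<ar R}"
    unfolding star_sig_def by blast
  then show ?thesis
  proof cases
    case TS
    then obtain a where a: "xs = [Inl a]" "length a = j" "set a \<subseteq> univ X"
      using xs unfolding TS(1) rels_star_simps by blast
    then show ?thesis using TS by simp
  next
    case TI
    then obtain a where a: "xs = [Inl a, Inl (map (\<lambda>t. a ! t) ix)]" "length a = j" "set a \<subseteq> univ X"
      using xs unfolding TI(1) rels_star_simps by blast
    have "set (map (\<lambda>t. a ! t) ix) \<subseteq> set a" using nth_sub[of ix a] TI a by simp
    then show ?thesis using TI a by simp
  next
    case RS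
    then obtain a where a: "xs = [Inr (R, a)]" "a \<in> rels X R"
      using xs unfolding RS(1) rels_star_simps by blast
    then show ?thesis using RS by simp
  next
    case RI
    then obtain a where a: "xs = [Inr (R, a), Inl (map (\<lambda>t. a ! t) ix)]" "a \<in> rels X R"
      using xs unfolding RI(1) rels_star_simps by blast
    have "rels X R \<subseteq> {xs. length xs = ar R \<and> set xs \<subseteq> univ X}" using sX RI by (simp add: is_struc_def)
    then have "length a = ar R" using a by blast
    then have "set (map (\<lambda>t. a ! t) ix) \<subseteq> set a" using nth_sub[of ix a] RI by simp
    then show ?thesis using RI a by simp
  qed
qed

lemma L_supp1:
  fixes X :: "('x, 'r) struc" and A :: "('a, 'r) struc" and f :: "'x \<Rightarrow> 'a"
  assumes sX: "is_struc sig ar X" and s: "s \<in> star_sig sig ar k"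
    and xs: "xs \<in> rels (star sig ar k X) s"
    and f: "f \<in> set (bs (hd xs)) \<rightarrow>\<^sub>E univ A" and e: "ex f (hd xs) \<in> univ (star sig ar k A)"
  shows "map (ex f) xs \<in> rels (star sig ar k A) s"
proof -
  have eqS: "\<forall>i\<in>S. \<forall>i'\<in>S. map f a ! i = map f a ! i'"
    if "\<forall>i\<in>S. \<forall>i'\<in>S. a ! i = a ! i'" "S \<subseteq> {0..<length a}" for S and a :: "'x list"
  proof (intro ballI)
    fix i i' assume i: "i \<in> S" "i' \<in> S"
    then have "i < length a" "i' < length a" using that(2) by auto
    moreover have "a ! i = a ! i'" using that(1) i by blast
    ultimately show "map f a ! i = map f a ! i'" by simp
  qed
  have mm: "map f (map (\<lambda>t. a ! t) ix) = map (\<lambda>t. map f a ! t) ix"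
    if "set ix \<subseteq> {0..<length a}" for ix and a :: "'x list"
    using that by auto
  from s consider (TS) j S where "s = TS j S" "1 \<le> j" "j \<le> k" "S \<subseteq> {0..<j}"
    | (TI) j ix where "s = TI j ix" "1 \<le> j" "j \<le> k" "1 \<le> length ix" "length ix \<le> k" "set ix \<subseteq> {0..<j}"
    | (RS) R S where "s = RS R S" "R \<in> sig" "S \<subseteq> {0..<ar R}"
    | (RI) R ix where "s = RI R ix" "R \<in> sig" "1 \<le> length ix" "length ix \<le> k" "set ix \<subseteq> {0..<ar R}"
    unfolding star_sig_def by blast
  then show ?thesis
  proof cases
    case TS
    then obtain a where a: "xs = [Inl a]" "length a = j" "set a \<subseteq> univ X"
       "\<forall>i\<in>S. \<forall>i'\<in>S. a ! i = a ! i'"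
      using xs unfolding TS(1) rels_star_simps by blast
    have 1: "set (map f a) \<subseteq> univ A" using f a(1) by auto
    have 2: "\<forall>i\<in>S. \<forall>i'\<in>S. map f a ! i = map f a ! i'"
      using eqS[of S a] a(2,4) TS(4) by blast
    have 3: "length (map f a) = j" using a by simp
    have 4: "map (ex f) xs = [Inl (map f a)]" using a(1) by simp
    show ?thesis unfolding TS(1) rels_star_simps mem_Collect_eq
      by (intro exI[of _ "map f a"]) (use 1 2 3 4 in blast)
  next
    case TI
    then obtain a where a: "xs = [Inl a, Inl (map (\<lambda>t. a ! t) ix)]" "length a = j" "set a \<subseteq> univ X"
      using xs unfolding TI(1) rels_star_simps by blast
    have 1: "set (map f a) \<subseteq> univ A" using f a by auto
    have 2: "map f (map (\<lambda>t. a ! t) ix) = map (\<lambda>t. map f a ! t) ix"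
      using mm[of ix a] a TI by simp
    have 3: "length (map f a) = j" using a by simp
    have 4: "map (ex f) xs = [Inl (map f a), Inl (map f (map (\<lambda>t. a ! t) ix))]" using a by simp
    show ?thesis unfolding TI(1) rels_star_simps mem_Collect_eq
      by (intro exI[of _ "map f a"]) (use 1 2 3 4 in simp)
  next
    case RS
    then obtain a where a: "xs = [Inr (R, a)]" "a \<in> rels X R"
       "\<forall>i\<in>S. \<forall>i'\<in>S. a ! i = a ! i'"
      using xs unfolding RS(1) rels_star_simps by blast
    have "rels X R \<subseteq> {xs. length xs = ar R \<and> set xs \<subseteq> univ X}" using sX RS by (simp add: is_struc_def)
    then have "length a = ar R" using a by blast
    then have "S \<subseteq> {0..<length a}" using RS(3) by simp
    from eqS[OF a(3) this] have 2: "\<forall>i\<in>S. \<forall>i'\<in>S. map f a ! i = map f a ! i'" .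
    have 1: "map f a \<in> rels A R" using e a(1) by simp
    have 4: "map (ex f) xs = [Inr (R, map f a)]" using a(1) by simp
    show ?thesis unfolding RS(1) rels_star_simps mem_Collect_eq
      by (intro exI[of _ "map f a"]) (use 1 2 4 in blast)
  next
    case RI
    then obtain a where a: "xs = [Inr (R, a), Inl (map (\<lambda>t. a ! t) ix)]" "a \<in> rels X R"
      using xs unfolding RI(1) rels_star_simps by blast
    have "rels X R \<subseteq> {xs. length xs = ar R \<and> set xs \<subseteq> univ X}" using sX RI by (simp add: is_struc_def)
    then have "length a = ar R" using a by blast
    then have 2: "map f (map (\<lambda>t. a ! t) ix) = map (\<lambda>t. map f a ! t) ix"
      using mm[of ix a] RI by simp
    have 1: "map f a \<in> rels A R" using e a by simp
    have 4: "map (ex f) xs = [Inr (R, map f a), Inl (map f (map (\<lambda>t. a ! t) ix))]" using a by simp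
    show ?thesis unfolding RI(1) rels_star_simps mem_Collect_eq
      by (intro exI[of _ "map f a"]) (use 1 2 4 in simp)
  qed
qed

lemma card_set_ge1: "xs \<noteq> [] \<Longrightarrow> 1 \<le> card (set xs)"
  by (cases xs) (auto simp: card_gt_0_iff Suc_le_eq)

definition mu :: "('x set \<Rightarrow> ('x \<Rightarrow> 'a) \<Rightarrow> rat) \<Rightarrow> ('r \<Rightarrow> 'x list \<Rightarrow> ('x \<Rightarrow> 'a) \<Rightarrow> rat)
    \<Rightarrow> ('x list + ('r \<times> 'x list)) \<Rightarrow> ('x \<Rightarrow> 'a) \<Rightarrow> rat" where
  "mu p q w f = (case w of Inl x \<Rightarrow> p (set x) f | Inr Rx \<Rightarrow> q (fst Rx) (snd Rx) f)"

lemma mu_simps[simp]: "mu p q (Inl x) f = p (set x) f" "mu p q (Inr (R, x)) f = q R x f"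
  by (auto simp: mu_def)

definition pid where
  "pid p q A w c = (\<Sum>f\<in>{f \<in> set (bs w) \<rightarrow>\<^sub>E univ A. ex f w = c}. mu p q w f)"

definition Qd where
  "Qd p q A xs h = (\<Sum>f\<in>{f \<in> set (bs (hd xs)) \<rightarrow>\<^sub>E univ A. \<forall>w\<in>set xs. ex f w = h w}. mu p q (hd xs) f)"

definition P1 where
  "P1 p q A V h = pid p q A (the_elem V) (h (the_elem V))"

context
  fixes sig :: "'r set" and ar :: "'r \<Rightarrow> nat" and X :: "('x, 'r) struc" and A :: "('a, 'r) struc"
    and k :: nat
    and p :: "'x set \<Rightarrow> ('x \<Rightarrow> 'a) \<Rightarrow> rat" and q :: "'r \<Rightarrow> 'x list \<Rightarrow> ('x \<Rightarrow> 'a) \<Rightarrow> rat"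
  assumes sg: "signature sig ar" and sX: "is_struc sig ar X" and sA: "is_struc sig ar A"
    and k1: "1 \<le> k"
    and p01: "\<forall>V f. V \<subseteq> univ X \<and> 1 \<le> card V \<and> card V \<le> k \<and> f \<in> V \<rightarrow>\<^sub>E univ A
          \<longrightarrow> 0 \<le> p V f \<and> p V f \<le> 1"
    and q01: "\<forall>R x f. R \<in> sig \<and> x \<in> rels X R \<and> f \<in> set x \<rightarrow>\<^sub>E univ A
          \<longrightarrow> 0 \<le> q R x f \<and> q R x f \<le> 1"
    and pn: "\<forall>V. V \<subseteq> univ X \<and> 1 \<le> card V \<and> card V \<le> k
          \<longrightarrow> (\<Sum>f\<in>V \<rightarrow>\<^sub>E univ A. p V f) = 1"
    and pm: "\<forall>U V f. U \<noteq> {} \<and> U \<subseteq> V \<and> V \<subseteq> univ X \<and> card V \<le> k \<and> f \<in> U \<rightarrow>\<^sub>E univ A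
          \<longrightarrow> p U f = (\<Sum>g\<in>{g \<in> V \<rightarrow>\<^sub>E univ A. restrict g U = f}. p V g)"
    and qm: "\<forall>R x U f. R \<in> sig \<and> x \<in> rels X R \<and> U \<noteq> {} \<and> U \<subseteq> set x \<and> card U \<le> k
          \<and> f \<in> U \<rightarrow>\<^sub>E univ A
          \<longrightarrow> p U f = (\<Sum>g\<in>{g \<in> set x \<rightarrow>\<^sub>E univ A. restrict g U = f}. q R x g)"
    and qs: "\<forall>R x f. R \<in> sig \<and> x \<in> rels X R \<and> f \<in> set x \<rightarrow>\<^sub>E univ A \<and> map f x \<notin> rels A R
          \<longrightarrow> q R x f = 0"
begin

lemma fUA: "finite (univ A)" using sA by (simp add: is_struc_def)
lemma fUX: "finite (univ X)" using sX by (simp add: is_struc_def)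

lemma bsX: "w \<in> univ (star sig ar k X) \<Longrightarrow> bs w \<noteq> [] \<and> set (bs w) \<subseteq> univ X"
proof (cases w)
  case (Inl x)
  assume "w \<in> univ (star sig ar k X)"
  then show ?thesis using Inl by auto
next
  case (Inr Rx)
  assume w: "w \<in> univ (star sig ar k X)"
  obtain R x where Rx: "Rx = (R, x)" by (cases Rx)
  have "R \<in> sig" "x \<in> rels X R" using w Inr Rx by auto
  then have "length x = ar R" "set x \<subseteq> univ X" "1 \<le> ar R"
    using sX sg by (auto simp: is_struc_def signature_def)
  then show ?thesis using Inr Rx by auto
qed

lemma K1:
  assumes w: "w \<in> univ (star sig ar k X)" and f: "f \<in> set (bs w) \<rightarrow>\<^sub>E univ A"
  shows "0 \<le> mu p q w f"
proof (cases w)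
  case (Inl x)
  then have x: "1 \<le> length x" "length x \<le> k" "set x \<subseteq> univ X" using w by auto
  then have "x \<noteq> []" by auto
  then have "1 \<le> card (set x)" "card (set x) \<le> k"
    using card_set_ge1[of x] card_length[of x] x by auto
  then have "set x \<subseteq> univ X \<and> 1 \<le> card (set x) \<and> card (set x) \<le> k \<and> f \<in> set x \<rightarrow>\<^sub>E univ A"
    using x f Inl by simp
  then have "0 \<le> p (set x) f" using p01 by blast
  then show ?thesis using Inl by simp
next
  case (Inr Rx)
  obtain R x where Rx: "Rx = (R, x)" by (cases Rx)
  have "R \<in> sig" "x \<in> rels X R" using w Inr Rx by auto
  then have "0 \<le> q R x f" using q01 f Inr Rx by simp
  then show ?thesis using Inr Rx by simp
qed

lemma K4:
  assumes w: "w \<in> univ (star sig ar k X)" and y: "1 \<le> length y" "length y \<le> k" "set y \<subseteq> set (bs w)"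
    and f': "f' \<in> set y \<rightarrow>\<^sub>E univ A"
  shows "p (set y) f' = (\<Sum>f\<in>{f \<in> set (bs w) \<rightarrow>\<^sub>E univ A. restrict f (set y) = f'}. mu p q w f)"
proof -
  have ny: "set y \<noteq> {}" using y by auto
  have cy: "card (set y) \<le> k" using y card_length[of y] by auto
  show ?thesis
  proof (cases w)
    case (Inl x)
    then have x: "1 \<le> length x" "length x \<le> k" "set x \<subseteq> univ X" using w by auto
    then have "card (set x) \<le> k" using card_length[of x] by auto
    have "p (set y) f' = (\<Sum>g\<in>{g \<in> set x \<rightarrow>\<^sub>E univ A. restrict g (set y) = f'}. p (set x) g)"
      by (rule pm[rule_format]) (use ny x y f' Inl \<open>card (set x) \<le> k\<close> in auto)
    then show ?thesis using Inl by simp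
  next
    case (Inr Rx)
    obtain R x where Rx: "Rx = (R, x)" by (cases Rx)
    have "R \<in> sig" "x \<in> rels X R" using w Inr Rx by auto
    have "p (set y) f' = (\<Sum>g\<in>{g \<in> set x \<rightarrow>\<^sub>E univ A. restrict g (set y) = f'}. q R x g)"
      by (rule qm[rule_format]) (use ny cy y f' Inr Rx \<open>R \<in> sig\<close> \<open>x \<in> rels X R\<close> in auto)
    then show ?thesis using Inr Rx by simp
  qed
qed

lemma K2:
  assumes w: "w \<in> univ (star sig ar k X)"
  shows "(\<Sum>f\<in>set (bs w) \<rightarrow>\<^sub>E univ A. mu p q w f) = 1"
proof -
  define y where "y = [hd (bs w)]"
  have b: "bs w \<noteq> []" "set (bs w) \<subseteq> univ X" using bsX[OF w] by auto
  then have y: "1 \<le> length y" "length y \<le> k" "set y \<subseteq> set (bs w)"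
    using k1 by (auto simp: y_def)
  have "hd (bs w) \<in> univ X" using b by auto
  then have "set y \<subseteq> univ X \<and> 1 \<le> card (set y) \<and> card (set y) \<le> k" using k1 by (simp add: y_def)
  then have "(\<Sum>f'\<in>set y \<rightarrow>\<^sub>E univ A. p (set y) f') = 1"
    using pn by blast
  also have "(\<Sum>f'\<in>set y \<rightarrow>\<^sub>E univ A. p (set y) f') =
     (\<Sum>f'\<in>set y \<rightarrow>\<^sub>E univ A. \<Sum>f\<in>{f \<in> set (bs w) \<rightarrow>\<^sub>E univ A. restrict f (set y) = f'}. mu p q w f)"
    by (rule sum.cong[OF refl]) (rule K4[OF w y])
  also have "\<dots> = (\<Sum>f\<in>set (bs w) \<rightarrow>\<^sub>E univ A. mu p q w f)"
    by (rule sum.group) (use fUA y in \<open>auto simp: finite_PiE restrict_PiE_iff\<close>)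
  finally show ?thesis .
qed

lemma K3:
  assumes w: "w \<in> univ (star sig ar k X)" and f: "f \<in> set (bs w) \<rightarrow>\<^sub>E univ A"
    and nz: "mu p q w f \<noteq> 0"
  shows "ex f w \<in> univ (star sig ar k A)"
proof (cases w)
  case (Inl x)
  then show ?thesis using w f by auto
next
  case (Inr Rx)
  obtain R x where Rx: "Rx = (R, x)" by (cases Rx)
  have "R \<in> sig" "x \<in> rels X R" using w Inr Rx by auto
  moreover have "f \<in> set x \<rightarrow>\<^sub>E univ A" "q R x f \<noteq> 0" using f nz Inr Rx by auto
  ultimately have "map f x \<in> rels A R" using qs by blast
  then show ?thesis using Inr Rx \<open>R \<in> sig\<close> by simp
qed

lemma Kb:
  assumes w: "w \<in> univ (star sig ar k X)"
  shows "0 \<le> (\<Sum>f\<in>{f \<in> set (bs w) \<rightarrow>\<^sub>E univ A. P f}. mu p q w f) \<and>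
         (\<Sum>f\<in>{f \<in> set (bs w) \<rightarrow>\<^sub>E univ A. P f}. mu p q w f) \<le> 1"
proof
  show "0 \<le> (\<Sum>f\<in>{f \<in> set (bs w) \<rightarrow>\<^sub>E univ A. P f}. mu p q w f)"
    by (rule sum_nonneg) (use K1[OF w] in auto)
  have "(\<Sum>f\<in>{f \<in> set (bs w) \<rightarrow>\<^sub>E univ A. P f}. mu p q w f) \<le> (\<Sum>f\<in>set (bs w) \<rightarrow>\<^sub>E univ A. mu p q w f)"
    by (rule sum_mono2) (use K1[OF w] fUA in \<open>auto simp: finite_PiE\<close>)
  then show "(\<Sum>f\<in>{f \<in> set (bs w) \<rightarrow>\<^sub>E univ A. P f}. mu p q w f) \<le> 1" using K2[OF w] by simp
qed

lemma K5:
  assumes w: "w \<in> univ (star sig ar k X)" and y: "1 \<le> length y" "length y \<le> k" "set y \<subseteq> set (bs w)"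
  shows "pid p q A (Inl y) c = (\<Sum>f\<in>{f \<in> set (bs w) \<rightarrow>\<^sub>E univ A. ex f (Inl y) = c}. mu p q w f)"
proof -
  let ?T = "{f' \<in> set y \<rightarrow>\<^sub>E univ A. Inl (map f' y) = c}"
  let ?S = "{f \<in> set (bs w) \<rightarrow>\<^sub>E univ A. ex f (Inl y) = c}"
  have "pid p q A (Inl y) c = (\<Sum>f'\<in>?T. p (set y) f')"
    by (simp add: pid_def)
  also have "\<dots> = (\<Sum>f'\<in>?T. \<Sum>f\<in>{f \<in> set (bs w) \<rightarrow>\<^sub>E univ A. restrict f (set y) = f'}. mu p q w f)"
    by (rule sum.cong[OF refl]) (rule K4[OF w y], simp)
  also have "\<dots> = (\<Sum>f'\<in>?T. \<Sum>f\<in>{f \<in> ?S. restrict f (set y) = f'}. mu p q w f)"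
  proof (rule sum.cong[OF refl])
    fix f' assume f': "f' \<in> ?T"
    have key: "ex f (Inl y) = c" if r: "restrict f (set y) = f'" for f
    proof -
      from r have "map f y = map f' y" by auto
      then have e1: "ex f (Inl y) = Inl (map f' y)" by (simp only: ex_simps)
      have e2: "Inl (map f' y) = c" using f' by simp
      show ?thesis by (rule trans[OF e1 e2])
    qed
    have "{f \<in> set (bs w) \<rightarrow>\<^sub>E univ A. restrict f (set y) = f'} = {f \<in> ?S. restrict f (set y) = f'}"
      using key by blast
    then show "(\<Sum>f\<in>{f \<in> set (bs w) \<rightarrow>\<^sub>E univ A. restrict f (set y) = f'}. mu p q w f) =
        (\<Sum>f\<in>{f \<in> ?S. restrict f (set y) = f'}. mu p q w f)" by simp
  qed
  also have "\<dots> = (\<Sum>f\<in>?S. mu p q w f)"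
  proof (rule sum.group)
    show "finite ?S" using fUA by (auto simp: finite_PiE)
    show "finite ?T" using fUA by (auto simp: finite_PiE)
    show "(\<lambda>f. restrict f (set y)) ` ?S \<subseteq> ?T"
    proof
      fix g assume "g \<in> (\<lambda>f. restrict f (set y)) ` ?S"
      then obtain f where f: "f \<in> ?S" "g = restrict f (set y)" by blast
      then have "map g y = map f y" by auto
      moreover have "ex f (Inl y) = c" using f(1) by blast
      ultimately have c: "Inl (map g y) = c" by (simp only: ex_simps)
      have "f \<in> set (bs w) \<rightarrow>\<^sub>E univ A" using f(1) by blast
      then have "\<forall>i\<in>set y. f i \<in> univ A" using y(3) by blast
      then have "g \<in> set y \<rightarrow>\<^sub>E univ A" using f(2) by (simp add: restrict_PiE_iff)
      then show "g \<in> ?T" using c by blast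
    qed
  qed
  finally show ?thesis .
qed

lemma finUXs: "finite (univ (star sig ar k X))" using finite_star[OF sg sX] .
lemma finUAs: "finite (univ (star sig ar k A))" using finite_star[OF sg sA] .

lemma dir1_c5:
  assumes s: "s \<in> star_sig sig ar k" and xs: "xs \<in> rels (star sig ar k X) s"
    and u: "u \<in> set xs" and c: "c \<in> univ (star sig ar k A)"
  shows "(\<Sum>g\<in>{g \<in> set xs \<rightarrow>\<^sub>E univ (star sig ar k A). g u = c}. Qd p q A xs g) = pid p q A u c"
proof -
  let ?UA = "univ (star sig ar k A)"
  let ?w0 = "hd xs"
  let ?W = "set xs"
  let ?F = "set (bs ?w0) \<rightarrow>\<^sub>E univ A"
  let ?G = "{g \<in> ?W \<rightarrow>\<^sub>E ?UA. g u = c}"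
  have st: "xs \<noteq> [] \<and> hd xs \<in> univ (star sig ar k X) \<and>
    (\<forall>w\<in>set xs. w = hd xs \<or> (\<exists>y. w = Inl y \<and> 1 \<le> length y \<and> length y \<le> k \<and> set y \<subseteq> set (bs (hd xs))))"
    by (rule L_struct[OF sX s xs])
  then have w0: "?w0 \<in> univ (star sig ar k X)" by blast
  have good: "ex f w \<in> ?UA" if f: "f \<in> ?F" "mu p q ?w0 f \<noteq> 0" and w: "w \<in> ?W" for f w
  proof -
    from st w consider "w = ?w0" | y where "w = Inl y" "1 \<le> length y" "length y \<le> k" "set y \<subseteq> set (bs ?w0)"
      by blast
    then show ?thesis
    proof cases
      case 1 then show ?thesis using K3[OF w0 f] by simp
    next
      case 2
      have "set (map f y) \<subseteq> univ A" using f(1) 2(4) by auto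
      then show ?thesis using 2 by simp
    qed
  qed
  have "(\<Sum>g\<in>?G. Qd p q A xs g) = (\<Sum>g\<in>?G. \<Sum>f\<in>{f \<in> ?F. \<forall>w\<in>?W. ex f w = g w}. mu p q ?w0 f)"
    by (simp add: Qd_def)
  also have "\<dots> = (\<Sum>f\<in>?F. \<Sum>g\<in>{g \<in> ?G. \<forall>w\<in>?W. ex f w = g w}. mu p q ?w0 f)"
    by (rule sum.swap_restrict) (use finUAs fUA in \<open>auto simp: finite_PiE\<close>)
  also have "\<dots> = (\<Sum>f\<in>?F. if ex f u = c then mu p q ?w0 f else 0)"
  proof (rule sum.cong[OF refl])
    fix f assume f: "f \<in> ?F"
    show "(\<Sum>g\<in>{g \<in> ?G. \<forall>w\<in>?W. ex f w = g w}. mu p q ?w0 f) = (if ex f u = c then mu p q ?w0 f else 0)"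
    proof (cases "mu p q ?w0 f = 0")
      case True then show ?thesis by simp
    next
      case False
      have gd: "\<forall>w\<in>?W. ex f w \<in> ?UA" using good[OF f False] by blast
      show ?thesis
      proof (cases "ex f u = c")
        case True
        have "{g \<in> ?G. \<forall>w\<in>?W. ex f w = g w} = {restrict (\<lambda>w. ex f w) ?W}"
        proof
          show "{g \<in> ?G. \<forall>w\<in>?W. ex f w = g w} \<subseteq> {restrict (\<lambda>w. ex f w) ?W}"
          proof
            fix g assume g: "g \<in> {g \<in> ?G. \<forall>w\<in>?W. ex f w = g w}"
            then have "g \<in> ?W \<rightarrow>\<^sub>E ?UA" by blast
            then have "g = restrict (\<lambda>w. ex f w) ?W" using g
              by (intro ext) (auto simp: PiE_def extensional_def)
            then show "g \<in> {restrict (\<lambda>w. ex f w) ?W}" by simp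
          qed
          show "{restrict (\<lambda>w. ex f w) ?W} \<subseteq> {g \<in> ?G. \<forall>w\<in>?W. ex f w = g w}"
            using gd True u by auto
        qed
        then show ?thesis using True by simp
      next
        case False
        have e: "{g \<in> ?G. \<forall>w\<in>?W. ex f w = g w} = {}" using False u by auto
        show ?thesis unfolding e using False by simp
      qed
    qed
  qed
  also have "\<dots> = (\<Sum>f\<in>{f \<in> ?F. ex f u = c}. mu p q ?w0 f)"
    by (rule sum.inter_filter[symmetric]) (use fUA in \<open>auto simp: finite_PiE\<close>)
  also have "\<dots> = pid p q A u c"
  proof -
    from st u consider "u = ?w0" | y where "u = Inl y" "1 \<le> length y" "length y \<le> k" "set y \<subseteq> set (bs ?w0)"
      by blast
    then show ?thesis
    proof cases
      case 1 then show ?thesis by (simp add: pid_def)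
    next
      case 2
      show ?thesis unfolding 2(1) by (rule K5[OF w0 2(2-4), symmetric])
    qed
  qed
  finally show ?thesis .
qed

lemma dir1_main: "SA_feasible (star_sig sig ar k) star_ar 1 (star sig ar k X) (star sig ar k A)"
proof -
  let ?UX = "univ (star sig ar k X)" and ?UA = "univ (star sig ar k A)"
  have sing: "\<exists>w. V = {w}" if "1 \<le> card V" "card V \<le> (1::nat)" for V :: "('x list + 'r \<times> 'x list) set"
    using that by (metis card_1_singletonE le_antisym)
  have c1: "0 \<le> P1 p q A V h \<and> P1 p q A V h \<le> 1" if "V \<subseteq> ?UX" "1 \<le> card V" "card V \<le> 1" for V h
  proof -
    from sing[OF that(2,3)] obtain w where V: "V = {w}" by blast
    then have w: "w \<in> ?UX" using that by simp
    show ?thesis unfolding P1_def pid_def V the_elem_eq by (rule Kb[OF w])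
  qed
  have c2: "0 \<le> Qd p q A xs h \<and> Qd p q A xs h \<le> 1"
    if "s \<in> star_sig sig ar k" "xs \<in> rels (star sig ar k X) s" for s xs h
  proof -
    have "hd xs \<in> ?UX" using L_struct[OF sX that] by blast
    then show ?thesis unfolding Qd_def by (rule Kb)
  qed
  have c3: "(\<Sum>h\<in>V \<rightarrow>\<^sub>E ?UA. P1 p q A V h) = 1" if "V \<subseteq> ?UX" "1 \<le> card V" "card V \<le> 1" for V
  proof -
    from sing[OF that(2,3)] obtain w where V: "V = {w}" by blast
    then have w: "w \<in> ?UX" using that by simp
    have "(\<Sum>h\<in>V \<rightarrow>\<^sub>E ?UA. P1 p q A V h) = (\<Sum>c\<in>?UA. pid p q A w c)"
      unfolding V P1_def the_elem_eq by (rule sum_singleton_PiE)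
    also have "\<dots> = (\<Sum>c\<in>?UA. \<Sum>f\<in>{f \<in> {f \<in> set (bs w) \<rightarrow>\<^sub>E univ A. ex f w \<in> ?UA}. ex f w = c}. mu p q w f)"
      unfolding pid_def by (rule sum.cong[OF refl], rule sum.cong) auto
    also have "\<dots> = (\<Sum>f\<in>{f \<in> set (bs w) \<rightarrow>\<^sub>E univ A. ex f w \<in> ?UA}. mu p q w f)"
      by (rule sum.group) (use fUA finUAs in \<open>auto simp: finite_PiE\<close>)
    also have "\<dots> = (\<Sum>f\<in>set (bs w) \<rightarrow>\<^sub>E univ A. mu p q w f)"
      by (rule sum.mono_neutral_left) (use K3[OF w] fUA in \<open>auto simp: finite_PiE\<close>)
    also have "\<dots> = 1" by (rule K2[OF w])
    finally show ?thesis .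
  qed
  have c4: "P1 p q A U f = (\<Sum>g\<in>{g \<in> V \<rightarrow>\<^sub>E ?UA. restrict g U = f}. P1 p q A V g)"
    if "U \<noteq> {}" "U \<subseteq> V" "V \<subseteq> ?UX" "card V \<le> 1" "f \<in> U \<rightarrow>\<^sub>E ?UA" for U V f
  proof -
    have fV: "finite V" using that(3) finUXs finite_subset by blast
    then have "finite U" using that(2) finite_subset by blast
    then have "1 \<le> card U" using that(1) by (simp add: Suc_le_eq card_gt_0_iff)
    moreover have "card U \<le> card V" using fV that(2) card_mono by blast
    ultimately have "card U = card V" using that(4) by simp
    then have "U = V" using card_subset_eq[OF fV that(2)] by simp
    then show ?thesis using PiE_restrict_self[OF that(5)] by simp
  qed
  have c5: "P1 p q A U f = (\<Sum>g\<in>{g \<in> set xs \<rightarrow>\<^sub>E ?UA. restrict g U = f}. Qd p q A xs g)"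
    if "s \<in> star_sig sig ar k" "xs \<in> rels (star sig ar k X) s" "U \<noteq> {}" "U \<subseteq> set xs"
      "card U \<le> 1" "f \<in> U \<rightarrow>\<^sub>E ?UA" for s xs U f
  proof -
    have "finite U" using that(4) finite_subset by blast
    then have "1 \<le> card U" using that(3) by (simp add: Suc_le_eq card_gt_0_iff)
    from sing[OF this that(5)] obtain u where U: "U = {u}" by blast
    have fu: "f u \<in> ?UA" using that(6) U by auto
    have "{g \<in> set xs \<rightarrow>\<^sub>E ?UA. restrict g U = f} = {g \<in> set xs \<rightarrow>\<^sub>E ?UA. g u = f u}"
      using restrict_singleton_iff[of f u ?UA] that(6) U by auto
    moreover have "(\<Sum>g\<in>{g \<in> set xs \<rightarrow>\<^sub>E ?UA. g u = f u}. Qd p q A xs g) = pid p q A u (f u)"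
      by (rule dir1_c5[OF that(1,2) _ fu]) (use that(4) U in auto)
    ultimately show ?thesis by (simp add: P1_def U)
  qed
  have c6: "Qd p q A xs h = 0"
    if "s \<in> star_sig sig ar k" "xs \<in> rels (star sig ar k X) s" "h \<in> set xs \<rightarrow>\<^sub>E ?UA"
      "map h xs \<notin> rels (star sig ar k A) s" for s xs h
  proof (rule ccontr)
    assume "Qd p q A xs h \<noteq> 0"
    then obtain f where f: "f \<in> {f \<in> set (bs (hd xs)) \<rightarrow>\<^sub>E univ A. \<forall>w\<in>set xs. ex f w = h w}"
      and nz: "mu p q (hd xs) f \<noteq> 0"
      unfolding Qd_def by (meson sum.not_neutral_contains_not_neutral)
    have w0: "hd xs \<in> ?UX" using L_struct[OF sX that(1,2)] by blast
    have fF: "f \<in> set (bs (hd xs)) \<rightarrow>\<^sub>E univ A" using f by blast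
    have "map (ex f) xs \<in> rels (star sig ar k A) s"
      by (rule L_supp1[OF sX that(1,2) fF K3[OF w0 fF nz]])
    moreover have "map (ex f) xs = map h xs" using f by auto
    ultimately show False using that(4) by simp
  qed
  show ?thesis
    unfolding SA_feasible_def
    apply (rule exI[of _ "P1 p q A"], rule exI[of _ "\<lambda>s. Qd p q A"])
    apply (intro conjI)
    subgoal using c1 by blast
    subgoal using c2 by blast
    subgoal using c3 by blast
    subgoal using c4 by blast
    subgoal using c5 by blast
    subgoal using c6 by blast
    done
qed

end


type_synonym ('x, 'r) selt = "'x list + ('r \<times> 'x list)"

definition pt :: "(('x, 'r) selt set \<Rightarrow> (('x, 'r) selt \<Rightarrow> ('a, 'r) selt) \<Rightarrow> rat)
   \<Rightarrow> ('x, 'r) selt \<Rightarrow> ('a, 'r) selt \<Rightarrow> rat" where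
  "pt P w c = P {w} (restrict (\<lambda>_. c) {w})"

definition idx :: "'x list \<Rightarrow> 'x \<Rightarrow> nat" where
  "idx e v = (SOME i. i < length e \<and> e ! i = v)"

lemma idx: "v \<in> set e \<Longrightarrow> idx e v < length e \<and> e ! idx e v = v"
  unfolding idx_def by (rule someI_ex) (auto simp: in_set_conv_nth)

lemma idx_map:
  assumes "set y \<subseteq> set e"
  shows "map (\<lambda>t. e ! t) (map (idx e) y) = y" "set (map (idx e) y) \<subseteq> {0..<length e}"
proof -
  have "map (\<lambda>t. e ! t) (map (idx e) y) = map (\<lambda>v. v) y"
    unfolding map_map by (rule map_cong[OF refl]) (use assms idx in \<open>force\<close>)
  then show "map (\<lambda>t. e ! t) (map (idx e) y) = y" by simp
  show "set (map (idx e) y) \<subseteq> {0..<length e}" using assms idx by fastforce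
qed

definition en :: "'x set \<Rightarrow> 'x list" where
  "en V = (SOME xs. distinct xs \<and> set xs = V)"

lemma en: "finite V \<Longrightarrow> distinct (en V) \<and> set (en V) = V \<and> length (en V) = card V"
proof -
  assume "finite V"
  then have "distinct (en V) \<and> set (en V) = V"
    unfolding en_def by (rule someI_ex[OF finite_distinct_list[THEN exE]]) blast
  then show ?thesis using distinct_card by fastforce
qed

lemma projrel:
  assumes "s = TI j ix \<or> s = RI R ix" "[c0, c1] \<in> rels (star sig ar k A) s"
  shows "c1 = projf ix c0"
  using assms by (auto simp: rels_star_simps projf_def)

lemma star_sig_simps[simp]:
  "TS j S \<in> star_sig sig ar k \<longleftrightarrow> 1 \<le> j \<and> j \<le> k \<and> S \<subseteq> {0..<j}"
  "TI j ix \<in> star_sig sig ar k \<longleftrightarrow> 1 \<le> j \<and> j \<le> k \<and> 1 \<le> length ix \<and> length ix \<le> k \<and> set ix \<subseteq> {0..<j}"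
  "RS R S \<in> star_sig sig ar k \<longleftrightarrow> R \<in> sig \<and> S \<subseteq> {0..<ar R}"
  "RI R ix \<in> star_sig sig ar k \<longleftrightarrow> R \<in> sig \<and> 1 \<le> length ix \<and> length ix \<le> k \<and> set ix \<subseteq> {0..<ar R}"
  by (auto simp: star_sig_def)

definition Phi where
  "Phi P sig ar k A w g = (if ex g w \<in> univ (star sig ar k A) then pt P w (ex g w) else 0)"

context
  fixes sig :: "'r set" and ar :: "'r \<Rightarrow> nat" and X :: "('x, 'r) struc" and A :: "('a, 'r) struc"
    and k :: nat
    and P :: "('x, 'r) selt set \<Rightarrow> (('x, 'r) selt \<Rightarrow> ('a, 'r) selt) \<Rightarrow> rat"
    and Q :: "'r starsym \<Rightarrow> ('x, 'r) selt list \<Rightarrow> (('x, 'r) selt \<Rightarrow> ('a, 'r) selt) \<Rightarrow> rat"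
  assumes sg: "signature sig ar" and sX: "is_struc sig ar X" and sA: "is_struc sig ar A"
    and k1: "1 \<le> k"
    and p01: "\<forall>V f. V \<subseteq> univ (star sig ar k X) \<and> 1 \<le> card V \<and> card V \<le> 1 \<and> f \<in> V \<rightarrow>\<^sub>E univ (star sig ar k A)
          \<longrightarrow> 0 \<le> P V f \<and> P V f \<le> 1"
    and pn: "\<forall>V. V \<subseteq> univ (star sig ar k X) \<and> 1 \<le> card V \<and> card V \<le> 1
          \<longrightarrow> (\<Sum>f\<in>V \<rightarrow>\<^sub>E univ (star sig ar k A). P V f) = 1"
    and qm: "\<forall>R x U f. R \<in> star_sig sig ar k \<and> x \<in> rels (star sig ar k X) R \<and> U \<noteq> {} \<and> U \<subseteq> set x \<and> card U \<le> 1
          \<and> f \<in> U \<rightarrow>\<^sub>E univ (star sig ar k A)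
          \<longrightarrow> P U f = (\<Sum>g\<in>{g \<in> set x \<rightarrow>\<^sub>E univ (star sig ar k A). restrict g U = f}. Q R x g)"
    and qs: "\<forall>R x f. R \<in> star_sig sig ar k \<and> x \<in> rels (star sig ar k X) R \<and> f \<in> set x \<rightarrow>\<^sub>E univ (star sig ar k A)
          \<and> map f x \<notin> rels (star sig ar k A) R
          \<longrightarrow> Q R x f = 0"
begin

lemma fUA2: "finite (univ A)" using sA by (simp add: is_struc_def)
lemma finUAs2: "finite (univ (star sig ar k A))" using finite_star[OF sg sA] .

lemma ptb:
  assumes "w \<in> univ (star sig ar k X)" "c \<in> univ (star sig ar k A)"
  shows "0 \<le> pt P w c \<and> pt P w c \<le> 1"
proof -
  have "{w} \<subseteq> univ (star sig ar k X) \<and> 1 \<le> card {w} \<and> card {w} \<le> (1::nat) \<and>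
     restrict (\<lambda>_. c) {w} \<in> {w} \<rightarrow>\<^sub>E univ (star sig ar k A)" using assms by simp
  then show ?thesis unfolding pt_def using p01 by blast
qed

lemma ptN:
  assumes "w \<in> univ (star sig ar k X)"
  shows "(\<Sum>c\<in>univ (star sig ar k A). pt P w c) = 1"
proof -
  have "{w} \<subseteq> univ (star sig ar k X) \<and> 1 \<le> card {w} \<and> card {w} \<le> (1::nat)" using assms by simp
  then have "(\<Sum>f\<in>{w} \<rightarrow>\<^sub>E univ (star sig ar k A). P {w} f) = 1" using pn by blast
  also have "(\<Sum>f\<in>{w} \<rightarrow>\<^sub>E univ (star sig ar k A). P {w} f) =
      (\<Sum>f\<in>{w} \<rightarrow>\<^sub>E univ (star sig ar k A). pt P w (f w))"
  proof (rule sum.cong[OF refl])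
    fix f assume f: "f \<in> {w} \<rightarrow>\<^sub>E univ (star sig ar k A)"
    then have "restrict (\<lambda>_. f w) {w} = f" using restrict_singleton_iff[OF f, of "\<lambda>_. f w"] by simp
    then show "P {w} f = pt P w (f w)" by (simp add: pt_def)
  qed
  also have "\<dots> = (\<Sum>c\<in>univ (star sig ar k A). pt P w c)" by (rule sum_singleton_PiE)
  finally show ?thesis by simp
qed

lemma ptM:
  assumes s: "s \<in> star_sig sig ar k" and xs: "xs \<in> rels (star sig ar k X) s"
    and u: "u \<in> set xs" and c: "c \<in> univ (star sig ar k A)"
  shows "pt P u c = (\<Sum>h\<in>{h \<in> set xs \<rightarrow>\<^sub>E univ (star sig ar k A). h u = c}. Q s xs h)"
proof -
  have f: "restrict (\<lambda>_. c) {u} \<in> {u} \<rightarrow>\<^sub>E univ (star sig ar k A)" using c by simp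
  have "s \<in> star_sig sig ar k \<and> xs \<in> rels (star sig ar k X) s \<and> {u} \<noteq> {} \<and> {u} \<subseteq> set xs \<and> card {u} \<le> (1::nat)
          \<and> restrict (\<lambda>_. c) {u} \<in> {u} \<rightarrow>\<^sub>E univ (star sig ar k A)" using s xs u f by simp
  then have "pt P u c = (\<Sum>g\<in>{g \<in> set xs \<rightarrow>\<^sub>E univ (star sig ar k A). restrict g {u} = restrict (\<lambda>_. c) {u}}. Q s xs g)"
    unfolding pt_def using qm by blast
  also have "{g \<in> set xs \<rightarrow>\<^sub>E univ (star sig ar k A). restrict g {u} = restrict (\<lambda>_. c) {u}} =
      {h \<in> set xs \<rightarrow>\<^sub>E univ (star sig ar k A). h u = c}"
    using restrict_singleton_iff[OF f] by simp
  finally show ?thesis .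
qed

lemma ptS:
  assumes s: "s \<in> star_sig sig ar k" and xs: "xs \<in> rels (star sig ar k X) s"
    and h: "h \<in> set xs \<rightarrow>\<^sub>E univ (star sig ar k A)" and nz: "Q s xs h \<noteq> 0"
  shows "map h xs \<in> rels (star sig ar k A) s"
  using qs s xs h nz by blast

lemma U1:
  assumes s: "s \<in> star_sig sig ar k" and xs: "[w] \<in> rels (star sig ar k X) s"
    and c: "c \<in> univ (star sig ar k A)" and nz: "pt P w c \<noteq> 0"
  shows "[c] \<in> rels (star sig ar k A) s"
proof -
  let ?h = "restrict (\<lambda>_. c) {w}"
  have e: "{h \<in> set [w] \<rightarrow>\<^sub>E univ (star sig ar k A). h w = c} = {?h}"
  proof
    show "{?h} \<subseteq> {h \<in> set [w] \<rightarrow>\<^sub>E univ (star sig ar k A). h w = c}" using c by simp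
    show "{h \<in> set [w] \<rightarrow>\<^sub>E univ (star sig ar k A). h w = c} \<subseteq> {?h}"
    proof
      fix h assume h: "h \<in> {h \<in> set [w] \<rightarrow>\<^sub>E univ (star sig ar k A). h w = c}"
      then have "h \<in> {w} \<rightarrow>\<^sub>E univ (star sig ar k A)" "h w = c" by auto
      then have "?h = h" using restrict_singleton_iff[of h w "univ (star sig ar k A)" "\<lambda>_. c"] by simp
      then show "h \<in> {?h}" by simp
    qed
  qed
  have "pt P w c = Q s [w] ?h" using ptM[OF s xs _ c] e by simp
  then have "Q s [w] ?h \<noteq> 0" using nz by simp
  moreover have "?h \<in> set [w] \<rightarrow>\<^sub>E univ (star sig ar k A)" using c by simp
  ultimately have "map ?h [w] \<in> rels (star sig ar k A) s" using ptS[OF s xs] by blast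
  then show ?thesis by simp
qed

lemma Sup:
  assumes w: "w \<in> univ (star sig ar k X)" and c: "c \<in> univ (star sig ar k A)" and nz: "pt P w c \<noteq> 0"
  shows "\<exists>g \<in> set (bs w) \<rightarrow>\<^sub>E univ A. c = ex g w"
proof (cases w)
  case (Inl x)
  then have x: "1 \<le> length x" "length x \<le> k" "set x \<subseteq> univ X" using w by auto
  have cin: "[c] \<in> rels (star sig ar k A) (TS (length x) {i, i'})"
    if i: "i < length x" "i' < length x" "x ! i = x ! i'" for i i'
  proof (rule U1[OF _ _ c])
    show "TS (length x) {i, i'} \<in> star_sig sig ar k" using x i by simp
    show "[w] \<in> rels (star sig ar k X) (TS (length x) {i, i'})"
      proof -
      have "\<forall>l\<in>{i, i'}. \<forall>l'\<in>{i, i'}. x ! l = x ! l'" using i(3) by simp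
      then show ?thesis unfolding rels_star_simps Inl using x by blast
    qed
    show "pt P w c \<noteq> 0" by (rule nz)
  qed
  have "x \<noteq> []" using x by auto
  with cin[of 0 0] obtain a where a: "c = Inl a" "length a = length x" "set a \<subseteq> univ A"
    unfolding rels_star_simps by auto
  have "a \<in> tgt x (univ A)"
    unfolding tgt_def
  proof (intro CollectI conjI allI impI)
    fix i i' assume i: "i < length x" "i' < length x" "x ! i = x ! i'"
    from cin[OF i] obtain a' where a': "[c] = [Inl a']" "\<forall>l\<in>{i, i'}. \<forall>l'\<in>{i, i'}. a' ! l = a' ! l'"
      unfolding rels_star_simps by blast
    then have "a' = a" using a(1) by simp
    moreover have "a' ! i = a' ! i'" using a'(2) by blast
    ultimately show "a ! i = a ! i'" by simp
  qed (use a in auto)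
  then obtain g where g: "g \<in> set x \<rightarrow>\<^sub>E univ A" "map g x = a"
    using bij_betw_imp_surj_on[OF bij_map[of x "univ A"]] by (metis imageE)
  then show ?thesis using a Inl by auto
next
  case (Inr Rx)
  obtain R x where Rx: "w = Inr (R, x)" using Inr by (cases Rx) auto
  then have R: "R \<in> sig" "x \<in> rels X R" using w by auto
  then have lx: "length x = ar R" using sX by (auto simp: is_struc_def)
  have cin: "[c] \<in> rels (star sig ar k A) (RS R {i, i'})"
    if i: "i < length x" "i' < length x" "x ! i = x ! i'" for i i'
  proof (rule U1[OF _ _ c])
    show "RS R {i, i'} \<in> star_sig sig ar k" using R i lx by simp
    show "[w] \<in> rels (star sig ar k X) (RS R {i, i'})"
      proof -
      have "\<forall>l\<in>{i, i'}. \<forall>l'\<in>{i, i'}. x ! l = x ! l'" using i(3) by simp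
      then show ?thesis unfolding rels_star_simps Rx using R by blast
    qed
    show "pt P w c \<noteq> 0" by (rule nz)
  qed
  have "1 \<le> ar R" using sg R by (auto simp: signature_def)
  with cin[of 0 0] lx obtain a where a: "c = Inr (R, a)" "a \<in> rels A R"
    unfolding rels_star_simps by auto
  then have la: "length a = length x" "set a \<subseteq> univ A" using sA R lx by (auto simp: is_struc_def)
  have "a \<in> tgt x (univ A)"
    unfolding tgt_def
  proof (intro CollectI conjI allI impI)
    fix i i' assume i: "i < length x" "i' < length x" "x ! i = x ! i'"
    from cin[OF i] obtain a' where a': "[c] = [Inr (R, a')]" "\<forall>l\<in>{i, i'}. \<forall>l'\<in>{i, i'}. a' ! l = a' ! l'"
      unfolding rels_star_simps by blast
    then have "a' = a" using a(1) by simp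
    moreover have "a' ! i = a' ! i'" using a'(2) by blast
    ultimately show "a ! i = a ! i'" by simp
  qed (use la in auto)
  then obtain g where g: "g \<in> set x \<rightarrow>\<^sub>E univ A" "map g x = a"
    using bij_betw_imp_surj_on[OF bij_map[of x "univ A"]] by (metis imageE)
  then show ?thesis using a Rx by auto
qed

lemma Proj:
  assumes s: "s \<in> star_sig sig ar k" and st: "s = TI j ix \<or> s = RI R ix"
    and xs: "[w0, w1] \<in> rels (star sig ar k X) s" and c: "c \<in> univ (star sig ar k A)"
  shows "pt P w1 c = (\<Sum>c'\<in>{c' \<in> univ (star sig ar k A). projf ix c' = c}. pt P w0 c')"
proof -
  let ?UA = "univ (star sig ar k A)"
  let ?H = "set [w0, w1] \<rightarrow>\<^sub>E ?UA"
  have fH: "finite ?H" using finUAs2 by (simp add: finite_PiE)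
  have "pt P w1 c = (\<Sum>h\<in>{h \<in> ?H. h w1 = c}. Q s [w0, w1] h)" by (rule ptM[OF s xs _ c]) simp
  also have "\<dots> = (\<Sum>h\<in>{h \<in> ?H. projf ix (h w0) = c}. Q s [w0, w1] h)"
  proof -
    have "(\<Sum>h\<in>{h \<in> ?H. h w1 = c}. Q s [w0, w1] h) = (\<Sum>h\<in>?H. if h w1 = c then Q s [w0, w1] h else 0)"
      by (rule sum.inter_filter[OF fH])
    also have "\<dots> = (\<Sum>h\<in>?H. if projf ix (h w0) = c then Q s [w0, w1] h else 0)"
    proof (rule sum.cong[OF refl])
      fix h assume h: "h \<in> ?H"
      show "(if h w1 = c then Q s [w0, w1] h else 0) = (if projf ix (h w0) = c then Q s [w0, w1] h else 0)"
      proof (cases "Q s [w0, w1] h = 0")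
        case False
        then have "map h [w0, w1] \<in> rels (star sig ar k A) s" using ptS[OF s xs h] by blast
        then have "h w1 = projf ix (h w0)" using projrel[OF st] by simp
        then show ?thesis by simp
      qed simp
    qed
    also have "\<dots> = (\<Sum>h\<in>{h \<in> ?H. projf ix (h w0) = c}. Q s [w0, w1] h)"
      by (rule sum.inter_filter[OF fH, symmetric])
    finally show ?thesis .
  qed
  also have "\<dots> = (\<Sum>c'\<in>{c' \<in> ?UA. projf ix c' = c}.
       \<Sum>h\<in>{h \<in> {h \<in> ?H. projf ix (h w0) = c}. h w0 = c'}. Q s [w0, w1] h)"
    by (rule sum.group[symmetric]) (use fH finUAs2 in auto)
  also have "\<dots> = (\<Sum>c'\<in>{c' \<in> ?UA. projf ix c' = c}. pt P w0 c')"
  proof (rule sum.cong[OF refl])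
    fix c' assume c': "c' \<in> {c' \<in> ?UA. projf ix c' = c}"
    have "{h \<in> {h \<in> ?H. projf ix (h w0) = c}. h w0 = c'} = {h \<in> ?H. h w0 = c'}" using c' by auto
    moreover have "pt P w0 c' = (\<Sum>h\<in>{h \<in> ?H. h w0 = c'}. Q s [w0, w1] h)"
      by (rule ptM[OF s xs]) (use c' in auto)
    ultimately show "(\<Sum>h\<in>{h \<in> {h \<in> ?H. projf ix (h w0) = c}. h w0 = c'}. Q s [w0, w1] h) = pt P w0 c'"
      by simp
  qed
  finally show ?thesis .
qed

lemma G1:
  assumes w: "w \<in> univ (star sig ar k X)"
  shows "(\<Sum>c\<in>{c \<in> univ (star sig ar k A). Pr c}. pt P w c) =
         (\<Sum>g\<in>{g \<in> set (bs w) \<rightarrow>\<^sub>E univ A. Pr (ex g w)}. Phi P sig ar k A w g)"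
proof -
  let ?UA = "univ (star sig ar k A)"
  let ?F = "set (bs w) \<rightarrow>\<^sub>E univ A"
  let ?S = "{g \<in> ?F. ex g w \<in> ?UA \<and> Pr (ex g w)}"
  have fF: "finite ?F" using fUA2 by (simp add: finite_PiE)
  have inj: "inj_on (\<lambda>g. ex g w) ?F"
  proof (rule inj_onI)
    fix g g' assume g: "g \<in> ?F" "g' \<in> ?F" "ex g w = ex g' w"
    then have "map g (bs w) = map g' (bs w)" by (metis bs_ex)
    then show "g = g'" using map_inj_PiE[OF g(1) g(2) refl] by blast
  qed
  have "(\<Sum>g\<in>{g \<in> ?F. Pr (ex g w)}. Phi P sig ar k A w g) = (\<Sum>g\<in>?S. Phi P sig ar k A w g)"
    by (rule sum.mono_neutral_right) (use fF in \<open>auto simp: Phi_def\<close>)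
  also have "\<dots> = (\<Sum>g\<in>?S. pt P w (ex g w))" by (rule sum.cong) (auto simp: Phi_def)
  also have "\<dots> = (\<Sum>c\<in>(\<lambda>g. ex g w) ` ?S. pt P w c)"
    by (rule sum.reindex[symmetric, unfolded comp_def]) (rule inj_on_subset[OF inj], blast)
  also have "\<dots> = (\<Sum>c\<in>{c \<in> ?UA. Pr c}. pt P w c)"
  proof (rule sum.mono_neutral_left)
    show "finite {c \<in> ?UA. Pr c}" using finUAs2 by simp
    show "(\<lambda>g. ex g w) ` ?S \<subseteq> {c \<in> ?UA. Pr c}" by auto
    show "\<forall>c\<in>{c \<in> ?UA. Pr c} - (\<lambda>g. ex g w) ` ?S. pt P w c = 0"
    proof (intro ballI, rule ccontr)
      fix c assume c: "c \<in> {c \<in> ?UA. Pr c} - (\<lambda>g. ex g w) ` ?S" and nz: "pt P w c \<noteq> 0"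
      then obtain g where g: "g \<in> ?F" "c = ex g w" using Sup[OF w _ nz] by blast
      then have "g \<in> ?S" using c by auto
      then show False using c g by blast
    qed
  qed
  finally show ?thesis by simp
qed

lemma G2:
  assumes w: "w \<in> univ (star sig ar k X)" and s: "s \<in> star_sig sig ar k" and st: "s = TI j ix \<or> s = RI R ix"
    and xs: "[w, Inl y] \<in> rels (star sig ar k X) s" and ixs: "set ix \<subseteq> {0..<length (bs w)}"
    and y: "y = map (\<lambda>t. bs w ! t) ix"
    and yU: "Inl y \<in> univ (star sig ar k X)" and f: "f \<in> set y \<rightarrow>\<^sub>E univ A"
  shows "Phi P sig ar k A (Inl y) f =
     (\<Sum>g\<in>{g \<in> set (bs w) \<rightarrow>\<^sub>E univ A. restrict g (set y) = f}. Phi P sig ar k A w g)"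
proof -
  have sfy: "set (map f y) \<subseteq> univ A" using f by auto
  have ey: "ex f (Inl y) \<in> univ (star sig ar k A)" using yU sfy by simp
  have sy: "set y \<subseteq> set (bs w)" using y ixs by auto
  have "Phi P sig ar k A (Inl y) f = pt P (Inl y) (Inl (map f y))" using ey by (simp add: Phi_def)
  also have "\<dots> = (\<Sum>c'\<in>{c' \<in> univ (star sig ar k A). projf ix c' = Inl (map f y)}. pt P w c')"
    by (rule Proj[OF s st xs]) (use ey in simp)
  also have "\<dots> = (\<Sum>g\<in>{g \<in> set (bs w) \<rightarrow>\<^sub>E univ A. projf ix (ex g w) = Inl (map f y)}. Phi P sig ar k A w g)"
    by (rule G1[OF w])
  also have "{g \<in> set (bs w) \<rightarrow>\<^sub>E univ A. projf ix (ex g w) = Inl (map f y)} =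
      {g \<in> set (bs w) \<rightarrow>\<^sub>E univ A. restrict g (set y) = f}"
  proof (rule Collect_cong, rule conj_cong[OF refl])
    fix g assume g: "g \<in> set (bs w) \<rightarrow>\<^sub>E univ A"
    have "projf ix (ex g w) = Inl (map g y)" using projf_ex[OF ixs] y by simp
    then have "projf ix (ex g w) = Inl (map f y) \<longleftrightarrow> map g y = map f y" by simp
    also have "\<dots> \<longleftrightarrow> restrict g (set y) = f" using restrict_map_iff[OF g f refl sy] by simp
    finally show "projf ix (ex g w) = Inl (map f y) \<longleftrightarrow> restrict g (set y) = f" .
  qed
  finally show ?thesis .
qed

lemma Phib:
  assumes "w \<in> univ (star sig ar k X)"
  shows "0 \<le> Phi P sig ar k A w g \<and> Phi P sig ar k A w g \<le> 1"
  using ptb[OF assms] by (simp add: Phi_def)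

lemma dir2_main: "SA_feasible sig ar k X A"
proof -
  let ?UXs = "univ (star sig ar k X)"
  let ?pk = "\<lambda>V f. Phi P sig ar k A (Inl (en V)) f"
  let ?qk = "\<lambda>R x g. Phi P sig ar k A (Inr (R, x)) g"
  have fUX: "finite (univ X)" using sX by (simp add: is_struc_def)
  have enU: "Inl (en V) \<in> ?UXs \<and> set (en V) = V \<and> length (en V) = card V"
    if "V \<subseteq> univ X" "1 \<le> card V" "card V \<le> k" for V
  proof -
    have "finite V" using that(1) fUX finite_subset by blast
    from en[OF this] show ?thesis using that by simp
  qed
  have c1: "0 \<le> ?pk V f \<and> ?pk V f \<le> 1" if "V \<subseteq> univ X" "1 \<le> card V" "card V \<le> k" for V f
    using Phib enU[OF that] by blast
  have c2: "0 \<le> ?qk R x g \<and> ?qk R x g \<le> 1" if "R \<in> sig" "x \<in> rels X R" for R x g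
    using Phib[of "Inr (R, x)"] that by simp
  have c3: "(\<Sum>f\<in>V \<rightarrow>\<^sub>E univ A. ?pk V f) = 1" if "V \<subseteq> univ X" "1 \<le> card V" "card V \<le> k" for V
  proof -
    have e: "Inl (en V) \<in> ?UXs" "set (en V) = V" using enU[OF that] by auto
    have "(\<Sum>c\<in>{c \<in> univ (star sig ar k A). True}. pt P (Inl (en V)) c) =
      (\<Sum>g\<in>{g \<in> set (bs (Inl (en V))) \<rightarrow>\<^sub>E univ A. True}. Phi P sig ar k A (Inl (en V)) g)"
      using G1[OF e(1), where Pr="\<lambda>_. True"] by simp
    then show ?thesis using ptN[OF e(1)] e(2) by simp
  qed
  have c4: "?pk U f = (\<Sum>g\<in>{g \<in> V \<rightarrow>\<^sub>E univ A. restrict g U = f}. ?pk V g)"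
    if "U \<noteq> {}" "U \<subseteq> V" "V \<subseteq> univ X" "card V \<le> k" "f \<in> U \<rightarrow>\<^sub>E univ A" for U V f
  proof -
    have fV: "finite V" using that(3) fUX finite_subset by blast
    have fU: "finite U" using that(2) fV finite_subset by blast
    have cU: "1 \<le> card U" using fU that(1) by (simp add: Suc_le_eq card_gt_0_iff)
    have cUV: "card U \<le> card V" using card_mono[OF fV that(2)] .
    have eV: "Inl (en V) \<in> ?UXs" "set (en V) = V" "length (en V) = card V"
      using enU[of V] that cU cUV by auto
    have eU: "Inl (en U) \<in> ?UXs" "set (en U) = U" "length (en U) = card U"
      using enU[of U] that cU cUV by auto
    define ix where "ix = map (idx (en V)) (en U)"
    have ix: "map (\<lambda>t. en V ! t) ix = en U" "set ix \<subseteq> {0..<length (en V)}"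
      using idx_map[of "en U" "en V"] eU eV that(2) by (auto simp: ix_def)
    have s: "TI (length (en V)) ix \<in> star_sig sig ar k"
      using ix eU eV cU cUV that(4) by (simp add: ix_def)
    have xs: "[Inl (en V), Inl (en U)] \<in> rels (star sig ar k X) (TI (length (en V)) ix)"
      unfolding rels_star_simps using ix(1)[symmetric] eV that(3) by auto
    have "?pk U f = (\<Sum>g\<in>{g \<in> set (bs (Inl (en V))) \<rightarrow>\<^sub>E univ A. restrict g (set (en U)) = f}.
        Phi P sig ar k A (Inl (en V)) g)"
    proof -
      have a1: "set ix \<subseteq> {0..<length (bs (Inl (en V)))}" using ix by simp
      have a2: "en U = map (\<lambda>t. bs (Inl (en V)) ! t) ix" using ix by simp
      have a3: "f \<in> set (en U) \<rightarrow>\<^sub>E univ A" using that(5) eU by simp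
      show ?thesis using G2[OF eV(1) s disjI1[OF refl] xs a1 a2 eU(1) a3] by simp
    qed
    then show ?thesis using eU(2) eV(2) by simp
  qed
  have c5: "?pk U f = (\<Sum>g\<in>{g \<in> set x \<rightarrow>\<^sub>E univ A. restrict g U = f}. ?qk R x g)"
    if "R \<in> sig" "x \<in> rels X R" "U \<noteq> {}" "U \<subseteq> set x" "card U \<le> k" "f \<in> U \<rightarrow>\<^sub>E univ A"
    for R x U f
  proof -
    have w: "Inr (R, x) \<in> ?UXs" using that by simp
    have "rels X R \<subseteq> {xs. length xs = ar R \<and> set xs \<subseteq> univ X}" using sX that(1) by (simp add: is_struc_def)
    then have lx: "length x = ar R" "set x \<subseteq> univ X" using that(2) by auto
    have fU: "finite U" using that(4) finite_subset by blast
    have cU: "1 \<le> card U" using fU that(3) by (simp add: Suc_le_eq card_gt_0_iff)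
    have eU: "Inl (en U) \<in> ?UXs" "set (en U) = U" "length (en U) = card U"
      using enU[of U] that cU lx by auto
    define ix where "ix = map (idx x) (en U)"
    have ix: "map (\<lambda>t. x ! t) ix = en U" "set ix \<subseteq> {0..<length x}"
      using idx_map[of "en U" x] eU that(4) by (auto simp: ix_def)
    have s: "RI R ix \<in> star_sig sig ar k"
      using ix eU cU that(1,5) lx by (simp add: ix_def)
    have xs: "[Inr (R, x), Inl (en U)] \<in> rels (star sig ar k X) (RI R ix)"
      unfolding rels_star_simps using ix(1)[symmetric] that(2) by auto
    have "?pk U f = (\<Sum>g\<in>{g \<in> set (bs (Inr (R, x))) \<rightarrow>\<^sub>E univ A. restrict g (set (en U)) = f}.
        Phi P sig ar k A (Inr (R, x)) g)"
    proof -
      have a1: "set ix \<subseteq> {0..<length (bs (Inr (R, x)))}" using ix by simp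
      have a2: "en U = map (\<lambda>t. bs (Inr (R, x)) ! t) ix" using ix by simp
      have a3: "f \<in> set (en U) \<rightarrow>\<^sub>E univ A" using that(6) eU by simp
      show ?thesis using G2[OF w s disjI2[OF refl] xs a1 a2 eU(1) a3] by simp
    qed
    then show ?thesis using eU(2) by simp
  qed
  have c6: "?qk R x g = 0" if "map g x \<notin> rels A R" for R x g
    using that by (simp add: Phi_def)
  show ?thesis
    unfolding SA_feasible_def
    apply (rule exI[of _ ?pk], rule exI[of _ ?qk])
    apply (intro conjI)
    subgoal using c1 by blast
    subgoal using c2 by blast
    subgoal using c3 by blast
    subgoal using c4 by blast
    subgoal using c5 by blast
    subgoal using c6 by blast
    done
qed

end

theorem lemma7p3:
  fixes sig :: "'r set" and ar :: "'r \<Rightarrow> nat"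
    and X :: "('x, 'r) struc" and A :: "('a, 'r) struc" and k :: nat
  assumes "signature sig ar"
    and "is_struc sig ar X"
    and "is_struc sig ar A"
    and "1 \<le> k"
  shows "SA_feasible sig ar k X A \<longleftrightarrow>
         SA_feasible (star_sig sig ar k) star_ar 1 (star sig ar k X) (star sig ar k A)"
proof
  assume "SA_feasible sig ar k X A"
  then show "SA_feasible (star_sig sig ar k) star_ar 1 (star sig ar k X) (star sig ar k A)"
    unfolding SA_feasible_def[of sig ar k X A]
    apply (elim exE conjE)
    apply (rule dir1_main[OF assms(1-4)])
    apply assumption+
    done
next
  assume "SA_feasible (star_sig sig ar k) star_ar 1 (star sig ar k X) (star sig ar k A)"
  then show "SA_feasible sig ar k X A"
    unfolding SA_feasible_def[of "star_sig sig ar k" star_ar 1 "star sig ar k X" "star sig ar k A"]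
    apply (elim exE conjE)
    apply (rule dir2_main[OF assms(1-4)])
    apply assumption+
    done
qed

end
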